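(* Let $(a_0,a_1,\ldots,a_n)$ be a finite sequence of positive integers and $\omega=[a_0,a_1,\ldots,a_n,1,1,1,\ldots]$. Then for every $\varepsilon>0$ there exist an integer $m>0$ and a positive integer $N$ such that the number $\beta$ whose continued fraction digits (indexed from $0$) are $a_0,\ldots,a_n$ in positions $0,\ldots,n$, the digit $N$ in position $n+m$, and $1$ in all other positions, satisfies $$\Phi(\omega)+\varepsilon<\Phi(\beta)<\Phi(\omega)+2\varepsilon.$$
   Context: For positive integers $d_0,d_1,\ldots$, $[d_0,d_1,d_2,\ldots]$ denotes the continued fraction $\cfrac{1}{d_0+\cfrac{1}{d_1+\cfrac{1}{d_2+\cdots}}}$, and for $\beta=[d_0,d_1,\ldots]$ we write $\alpha_j(\beta)=[d_j,d_{j+1},\ldots]$. The Yoccoz Brjuno function is $\Phi(\beta)=\sum_{k\ge 0}\alpha_0(\beta)\alpha_1(\beta)\cdots\alpha_{k-1}(\beta)\log\frac{1}{\alpha_k(\beta)}\in[0,\infty]$ (the $k=0$ term is $\log\frac{1}{\alpha_0(\beta)}$). *)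

theory Defs
  imports "HOL-Analysis.Analysis"
begin

fun cfrac_fin :: "(nat \<Rightarrow> nat) \<Rightarrow> nat \<Rightarrow> real" where
  "cfrac_fin d 0 = 1 / real (d 0)"
| "cfrac_fin d (Suc n) = 1 / (real (d 0) + cfrac_fin (\<lambda>k. d (Suc k)) n)"

definition cfrac :: "(nat \<Rightarrow> nat) \<Rightarrow> real" where
  "cfrac d = lim (cfrac_fin d)"

text \<open>alpha_j(beta): iterates of the Gauss map, alpha_0 = beta, alpha_(j+1) = frac(1/alpha_j);
  for beta = [d_0, d_1, ...] irrational this gives alpha_j = [d_j, d_(j+1), ...].\<close>
fun alpha :: "real \<Rightarrow> nat \<Rightarrow> real" where
  "alpha \<beta> 0 = \<beta>"
| "alpha \<beta> (Suc j) = frac (1 / alpha \<beta> j)"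

definition Phi :: "real \<Rightarrow> ereal" where
  "Phi \<beta> = (\<Sum>k. ereal ((\<Prod>j<k. alpha \<beta> j) * ln (1 / alpha \<beta> k)))"

end

theory Submission
  imports Defs
begin


fun V :: "(nat \<Rightarrow> nat) \<Rightarrow> nat \<Rightarrow> real \<Rightarrow> real" where
  "V d 0 t = t"
| "V d (Suc P) t = 1 / (real (d 0) + V (\<lambda>k. d (Suc k)) P t)"

lemma V_range:
  assumes "\<forall>k. d k \<ge> 1" "0 \<le> t" "t \<le> 1"
  shows "0 \<le> V d P t \<and> V d P t \<le> 1"
  using assms(1)
proof (induction P arbitrary: d)
  case 0 then show ?case using assms by simp
next
  case (Suc P)
  have h: "0 \<le> V (\<lambda>k. d (Suc k)) P t" using Suc.IH[of "\<lambda>k. d (Suc k)"] Suc.prems by simp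
  have "real (d 0) \<ge> 1" using Suc.prems by simp
  then show ?case using h by (simp add: divide_le_eq)
qed

lemma cfrac_fin_V: "cfrac_fin d n = V d n (1 / real (d n))"
  by (induction n arbitrary: d) auto

lemma V_add: "V d (n + k) t = V d n (V (\<lambda>i. d (n + i)) k t)"
  by (induction n arbitrary: d) auto

lemma cfrac_fin_add: "cfrac_fin d (n + k) = V d n (cfrac_fin (\<lambda>i. d (n + i)) k)"
  by (simp add: cfrac_fin_V V_add add.assoc)

lemma diff_step:
  fixes c x y :: real
  assumes "c \<ge> 1" "x \<ge> 0" "y \<ge> 0"
  shows "\<bar>1/(c+x) - 1/(c+y)\<bar> = (1/(c+x)) * (1/(c+y)) * \<bar>x - y\<bar>"
proof -
  have "1/(c+x) - 1/(c+y) = (1/(c+x)) * (1/(c+y)) * (y - x)"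
    using assms by (simp add: field_simps)
  then show ?thesis using assms by (simp add: abs_mult abs_minus_commute)
qed

lemma pair_half:
  fixes c x :: real
  assumes "c \<ge> 1" "x \<ge> 0" "x \<le> 1"
  shows "(1/(c+x)) * x \<le> 1/2"
  using assms by (simp add: field_simps)

lemma V_lip:
  assumes "\<forall>k. d k \<ge> 1" "0 \<le> t" "t \<le> 1" "0 \<le> t'" "t' \<le> 1"
  shows "\<bar>V d P t - V d P t'\<bar> \<le> (1/2) ^ (P div 2) * \<bar>t - t'\<bar>"
  using assms(1)
proof (induction P arbitrary: d rule: less_induct)
  case (less P)
  show ?case
  proof (cases P)
    case 0 then show ?thesis by simp
  next
    case (Suc Q)
    show ?thesis
    proof (cases Q)
      case 0
      have r: "0 \<le> V (\<lambda>k. d (Suc k)) 0 t" "0 \<le> V (\<lambda>k. d (Suc k)) 0 t'" using assms by auto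
      have "real (d 0) \<ge> 1" using less.prems by simp
      then have "\<bar>V d P t - V d P t'\<bar> = (1/(d 0 + t)) * (1/(d 0 + t')) * \<bar>t - t'\<bar>"
        using Suc 0 diff_step[of "real (d 0)" t t'] assms by simp
      also have "\<dots> \<le> 1 * 1 * \<bar>t - t'\<bar>"
        apply (intro mult_right_mono mult_mono) using \<open>real (d 0) \<ge> 1\<close> assms by auto
      finally show ?thesis using Suc 0 by simp
    next
      case (Suc R)
      define d1 where "d1 = (\<lambda>k. d (Suc k))"
      define d2 where "d2 = (\<lambda>k. d1 (Suc k))"
      have d1p: "\<forall>k. d1 k \<ge> 1" and d2p: "\<forall>k. d2 k \<ge> 1" using less.prems by (auto simp: d1_def d2_def)
      define x where "x = V d2 R t"
      define x' where "x' = V d2 R t'"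
      have xr: "0 \<le> x" "x \<le> 1" "0 \<le> x'" "x' \<le> 1"
        using V_range[OF d2p assms(2,3)] V_range[OF d2p assms(4,5)] by (auto simp: x_def x'_def)
      define y where "y = 1 / (real (d1 0) + x)"
      define y' where "y' = 1 / (real (d1 0) + x')"
      have c1: "real (d1 0) \<ge> 1" "real (d 0) \<ge> 1" using d1p less.prems by auto
      have yr: "0 \<le> y" "y \<le> 1" "0 \<le> y'" "y' \<le> 1" using xr c1 by (auto simp: y_def y'_def divide_le_eq)
      have IH: "\<bar>x - x'\<bar> \<le> (1/2) ^ (R div 2) * \<bar>t - t'\<bar>"
        using less.IH[of R d2] d2p \<open>P = Suc Q\<close> Suc by (auto simp: x_def x'_def)
      have VP: "V d P t = 1/(d 0 + y)" "V d P t' = 1/(d 0 + y')"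
        using \<open>P = Suc Q\<close> Suc by (simp_all add: y_def y'_def x_def x'_def d1_def d2_def)
      have "\<bar>V d P t - V d P t'\<bar> = (1/(d 0 + y)) * (1/(d 0 + y')) * \<bar>y - y'\<bar>"
        unfolding VP using diff_step[of "real (d 0)" y y'] c1 yr by simp
      also have "\<bar>y - y'\<bar> = y * y' * \<bar>x - x'\<bar>"
        unfolding y_def y'_def using diff_step[of "real (d1 0)" x x'] c1 xr by simp
      finally have "\<bar>V d P t - V d P t'\<bar> = ((1/(d 0 + y)) * y) * ((1/(d 0 + y')) * y') * \<bar>x - x'\<bar>"
        by (simp add: algebra_simps)
      also have "\<dots> \<le> (1/2) * (1/2) * \<bar>x - x'\<bar>"
        apply (intro mult_right_mono mult_mono pair_half) using c1 yr by auto
      also have "\<dots> \<le> (1/2) * (1/2) * ((1/2) ^ (R div 2) * \<bar>t - t'\<bar>)"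
        using IH by simp
      also have "\<dots> \<le> (1/2) ^ (P div 2) * \<bar>t - t'\<bar>"
        using \<open>P = Suc Q\<close> Suc by simp
      finally show ?thesis .
    qed
  qed
qed



lemma cfrac_fin_range:
  assumes "\<forall>k. d k \<ge> 1"
  shows "0 \<le> cfrac_fin d n \<and> cfrac_fin d n \<le> 1"
proof -
  have "real (d n) \<ge> 1" using assms by simp
  then have "0 \<le> 1 / real (d n)" "1 / real (d n) \<le> 1" by auto
  then show ?thesis unfolding cfrac_fin_V using V_range[OF assms] by blast
qed

lemma cfrac_fin_close:
  assumes "\<forall>k. d k \<ge> 1" "n \<le> m"
  shows "\<bar>cfrac_fin d m - cfrac_fin d n\<bar> \<le> (1/2) ^ (n div 2)"
proof -
  obtain k where m: "m = n + k" using assms(2) le_Suc_ex by blast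
  have dp: "\<forall>i. (\<lambda>i. d (n + i)) i \<ge> 1" using assms by simp
  have a: "0 \<le> cfrac_fin (\<lambda>i. d (n + i)) k" "cfrac_fin (\<lambda>i. d (n + i)) k \<le> 1"
    using cfrac_fin_range[OF dp] by auto
  have "real (d n) \<ge> 1" using assms by simp
  then have b: "0 \<le> 1 / real (d n)" "1 / real (d n) \<le> 1" by auto
  have "\<bar>cfrac_fin d m - cfrac_fin d n\<bar>
      = \<bar>V d n (cfrac_fin (\<lambda>i. d (n + i)) k) - V d n (1 / real (d n))\<bar>"
    by (simp add: m cfrac_fin_add cfrac_fin_V[of d n])
  also have "\<dots> \<le> (1/2) ^ (n div 2) * \<bar>cfrac_fin (\<lambda>i. d (n + i)) k - 1 / real (d n)\<bar>"
    using V_lip[OF assms(1) a b] .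
  also have "\<bar>cfrac_fin (\<lambda>i. d (n + i)) k - 1 / real (d n)\<bar> \<le> 1"
    using a b by linarith
  then have "(1/2::real) ^ (n div 2) * \<bar>cfrac_fin (\<lambda>i. d (n + i)) k - 1 / real (d n)\<bar> \<le> (1/2) ^ (n div 2) * 1"
    by (intro mult_left_mono) auto
  finally show ?thesis by simp
qed

lemma cfrac_fin_Cauchy:
  assumes "\<forall>k. d k \<ge> 1"
  shows "Cauchy (cfrac_fin d)"
proof (rule CauchyI)
  fix e :: real assume "0 < e"
  obtain j where j: "(1/2::real) ^ j < e" using real_arch_pow_inv[OF \<open>0 < e\<close>, of "1/2"] by auto
  show "\<exists>M. \<forall>m\<ge>M. \<forall>n\<ge>M. norm (cfrac_fin d m - cfrac_fin d n) < e"
  proof (intro exI allI impI)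
    fix m n assume mn: "2 * j \<le> m" "2 * j \<le> n"
    have pj: "(1/2::real) ^ (k div 2) \<le> (1/2) ^ j" if "2 * j \<le> k" for k
      by (rule power_decreasing) (use that in auto)
    show "norm (cfrac_fin d m - cfrac_fin d n) < e"
    proof (cases "n \<le> m")
      case True
      have "(1/2::real)^(n div 2) \<le> (1/2)^j" by (rule pj[OF mn(2)])
      then show ?thesis unfolding real_norm_def using cfrac_fin_close[OF assms True] j by linarith
    next
      case False
      then have "m \<le> n" by simp
      have "(1/2::real)^(m div 2) \<le> (1/2)^j" by (rule pj[OF mn(1)])
      then show ?thesis unfolding real_norm_def using cfrac_fin_close[OF assms \<open>m \<le> n\<close>] j
        by (simp only: abs_minus_commute)
    qed
  qed
qed

lemma cfrac_LIMSEQ: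
  assumes "\<forall>k. d k \<ge> 1"
  shows "cfrac_fin d \<longlonglongrightarrow> cfrac d"
  using cfrac_fin_Cauchy[OF assms] unfolding cfrac_def Cauchy_convergent_iff convergent_LIMSEQ_iff .

lemma cfrac_range0:
  assumes "\<forall>k. d k \<ge> 1"
  shows "0 \<le> cfrac d \<and> cfrac d \<le> 1"
proof
  show "0 \<le> cfrac d"
    by (rule LIMSEQ_le_const[OF cfrac_LIMSEQ[OF assms]]) (use cfrac_fin_range[OF assms] in auto)
  show "cfrac d \<le> 1"
    by (rule LIMSEQ_le_const2[OF cfrac_LIMSEQ[OF assms]]) (use cfrac_fin_range[OF assms] in auto)
qed

lemma cfrac_rec:
  assumes "\<forall>k. d k \<ge> 1"
  shows "cfrac d = 1 / (real (d 0) + cfrac (\<lambda>k. d (Suc k)))"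
proof -
  have dp: "\<forall>k. (\<lambda>k. d (Suc k)) k \<ge> 1" using assms by simp
  have "(\<lambda>n. cfrac_fin d (Suc n)) \<longlonglongrightarrow> cfrac d"
    using cfrac_LIMSEQ[OF assms] by (rule LIMSEQ_Suc)
  moreover have "(\<lambda>n. cfrac_fin d (Suc n)) \<longlonglongrightarrow> 1 / (real (d 0) + cfrac (\<lambda>k. d (Suc k)))"
  proof -
    have "real (d 0) + cfrac (\<lambda>k. d (Suc k)) \<noteq> 0"
    proof -
      have "real (d 0) \<ge> 1" using assms by simp
      then show ?thesis using cfrac_range0[OF dp] by linarith
    qed
    then have "(\<lambda>n. 1 / (real (d 0) + cfrac_fin (\<lambda>k. d (Suc k)) n)) \<longlonglongrightarrow> 1 / (real (d 0) + cfrac (\<lambda>k. d (Suc k)))"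
      by (intro tendsto_divide tendsto_const tendsto_add cfrac_LIMSEQ[OF dp])
    then show ?thesis by simp
  qed
  ultimately show ?thesis by (rule LIMSEQ_unique)
qed

lemma cfrac_range:
  assumes "\<forall>k. d k \<ge> 1"
  shows "0 < cfrac d \<and> cfrac d < 1"
proof -
  have dp: "\<forall>k. (\<lambda>k. d (Suc k)) k \<ge> 1" using assms by simp
  have dpp: "\<forall>k. (\<lambda>k. d (Suc (Suc k))) k \<ge> 1" using assms by simp
  have r1: "0 \<le> cfrac (\<lambda>k. d (Suc (Suc k)))" using cfrac_range0[OF dpp] by simp
  have c1: "real (d (Suc 0)) \<ge> 1" using assms by simp
  have s: "cfrac (\<lambda>k. d (Suc k)) = 1 / (real (d 1) + cfrac (\<lambda>k. d (Suc (Suc k))))"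
    using cfrac_rec[OF dp] by simp
  have spos: "0 < cfrac (\<lambda>k. d (Suc k))" unfolding s using r1 c1 by simp
  have c0: "real (d 0) \<ge> 1" using assms by simp
  have "cfrac (\<lambda>k. d (Suc k)) \<le> 1" using cfrac_range0[OF dp] by simp
  then show ?thesis unfolding cfrac_rec[OF assms] using spos c0
    by (auto simp: divide_less_eq)
qed

lemma alpha_cfrac:
  assumes "\<forall>k. d k \<ge> 1"
  shows "alpha (cfrac d) j = cfrac (\<lambda>i. d (j + i))"
proof (induction j)
  case 0 then show ?case by simp
next
  case (Suc j)
  have dj: "\<forall>k. (\<lambda>i. d (j + i)) k \<ge> 1" using assms by simp
  have dj1: "\<forall>k. (\<lambda>i. d (Suc j + i)) k \<ge> 1" using assms by simp
  have "1 / cfrac (\<lambda>i. d (j + i)) = real (d j) + cfrac (\<lambda>i. d (Suc j + i))"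
    using cfrac_rec[OF dj] cfrac_range[OF dj1] assms by simp
  then have "alpha (cfrac d) (Suc j) = frac (real (d j) + cfrac (\<lambda>i. d (Suc j + i)))"
    using Suc by simp
  also have "\<dots> = frac (cfrac (\<lambda>i. d (Suc j + i)))"
    by (rule frac_add_int_left) simp
  also have "\<dots> = cfrac (\<lambda>i. d (Suc j + i))"
    using cfrac_range[OF dj1] by (simp add: frac_eq)
  finally show ?case .
qed



definition Wp :: "(nat \<Rightarrow> real) \<Rightarrow> nat \<Rightarrow> real" where
  "Wp w k = (\<Prod>j<k. w j)"

definition recseq :: "(nat \<Rightarrow> real) \<Rightarrow> (nat \<Rightarrow> real) \<Rightarrow> bool" where
  "recseq u c \<longleftrightarrow> (\<forall>k. c k \<ge> 1 \<and> u k = 1 / (c k + u (Suc k)) \<and> 0 < u k \<and> u k \<le> 1)"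

lemma recseqD:
  assumes "recseq u c"
  shows "c k \<ge> 1" "u k = 1 / (c k + u (Suc k))" "0 < u k" "u k \<le> 1"
  using assms unfolding recseq_def by blast+

lemma prod_bound:
  assumes "recseq u c"
  shows "(\<Prod>i<l. u (a + i)) \<le> (1/2) ^ (l div 2)"
proof (induction l arbitrary: a rule: less_induct)
  case (less l)
  show ?case
  proof (cases l)
    case 0 then show ?thesis by simp
  next
    case (Suc r)
    show ?thesis
    proof (cases r)
      case 0
      have "u a \<le> 1" using recseqD[OF assms] by blast
      then show ?thesis using Suc 0 by simp
    next
      case (Suc s)
      have eq: "(\<Prod>i<l. u (a + i)) = (u a * u (Suc a)) * (\<Prod>i<s. u (Suc (Suc a) + i))"
        unfolding \<open>l = Suc r\<close> Suc prod.lessThan_Suc_shift by (simp add: ac_simps)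
      have ua: "u a = 1 / (c a + u (Suc a))" "c a \<ge> 1" "0 < u (Suc a)" "u (Suc a) \<le> 1"
        using recseqD[OF assms] by blast+
      have h1: "u a * u (Suc a) \<le> 1/2"
        using pair_half[of "c a" "u (Suc a)"] ua by (simp add: mult.commute)
      have h2: "(\<Prod>i<s. u (Suc (Suc a) + i)) \<le> (1/2) ^ (s div 2)"
        using less.IH[of s "Suc (Suc a)"] \<open>l = Suc r\<close> Suc by simp
      have nn: "0 \<le> (\<Prod>i<s. u (Suc (Suc a) + i))" "0 \<le> u a * u (Suc a)"
        using recseqD(3)[OF assms, THEN less_imp_le] by (simp_all add: prod_nonneg)
      have "(\<Prod>i<l. u (a + i)) \<le> (1/2) * (1/2) ^ (s div 2)"
        unfolding eq by (rule mult_mono[OF h1 h2]) (use nn in auto)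
      also have "\<dots> = (1/2) ^ (l div 2)" using \<open>l = Suc r\<close> Suc by simp
      finally show ?thesis .
    qed
  qed
qed

lemma prod_nonneg_le1:
  assumes "recseq u c"
  shows "0 \<le> (\<Prod>i\<in>A. u i) \<and> (\<Prod>i\<in>A. u i) \<le> 1"
proof -
  have "\<And>k. 0 \<le> u k" "\<And>k. u k \<le> 1" using recseqD(3,4)[OF assms] less_imp_le by blast+
  then show ?thesis by (simp add: prod_nonneg prod_le_1)
qed

lemma Wp_bound:
  assumes "recseq u c"
  shows "Wp u k \<le> (1/2) ^ (k div 2)"
  using prod_bound[OF assms, where l=k and a=0] by (simp add: Wp_def)

lemma Wp_nonneg:
  assumes "recseq u c"
  shows "0 \<le> Wp u k"
  using prod_nonneg_le1[OF assms] by (simp add: Wp_def)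

lemma Wp_split: "Wp u (j + l) = Wp u j * (\<Prod>i<l. u (j + i))"
  by (induction l) (auto simp: Wp_def)

lemma diff_chain:
  assumes ru: "recseq u cu" and rv: "recseq v cv"
    and agree: "\<forall>i<l. cu (k + i) = cv (k + i)"
  shows "\<bar>u k - v k\<bar> \<le> (\<Prod>i<l. u (k + i)) * \<bar>u (k + l) - v (k + l)\<bar>"
  using agree
proof (induction l arbitrary: k)
  case 0 then show ?case by simp
next
  case (Suc l)
  have c: "cu k = cv k" using Suc.prems by auto
  have ag: "\<forall>i<l. cu (Suc k + i) = cv (Suc k + i)" using Suc.prems by auto
  have uk: "u k = 1 / (cu k + u (Suc k))" "cu k \<ge> 1" "0 < u (Suc k)" "0 < u k"
    using recseqD[OF ru] by blast+
  have vk: "v k = 1 / (cu k + v (Suc k))" "0 < v (Suc k)" "v k \<le> 1" "0 < v k"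
    using recseqD[OF rv] c by metis+
  have "\<bar>u k - v k\<bar> = u k * v k * \<bar>u (Suc k) - v (Suc k)\<bar>"
    using diff_step[of "cu k" "u (Suc k)" "v (Suc k)"] uk vk by simp
  also have "\<dots> \<le> u k * \<bar>u (Suc k) - v (Suc k)\<bar>"
  proof -
    have "u k * v k \<le> u k" using uk vk by (intro mult_right_le_one_le) auto
    then show ?thesis by (rule mult_right_mono) simp
  qed
  also have "\<dots> \<le> u k * ((\<Prod>i<l. u (Suc k + i)) * \<bar>u (Suc k + l) - v (Suc k + l)\<bar>)"
    using Suc.IH[OF ag] uk by (intro mult_left_mono) auto
  also have "\<dots> = (\<Prod>i<Suc l. u (k + i)) * \<bar>u (k + Suc l) - v (k + Suc l)\<bar>"
    by (simp only: prod.lessThan_Suc_shift) (simp add: ac_simps)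
  finally show ?case .
qed

lemma Wp_diff:
  assumes ru: "recseq u cu" and rv: "recseq v cv"
  shows "\<bar>Wp u k - Wp v k\<bar> \<le> (\<Sum>j<k. Wp u j * \<bar>u j - v j\<bar>)"
proof (induction k)
  case 0 then show ?case by (simp add: Wp_def)
next
  case (Suc k)
  have eq: "Wp u (Suc k) - Wp v (Suc k) = (Wp u k - Wp v k) * v k + Wp u k * (u k - v k)"
    by (simp add: Wp_def algebra_simps)
  have v: "0 \<le> v k" "v k \<le> 1" using recseqD(3,4)[OF rv] by (auto simp: less_imp_le)
  have w: "0 \<le> Wp u k" using Wp_nonneg[OF ru] .
  have "\<bar>Wp u (Suc k) - Wp v (Suc k)\<bar> \<le> \<bar>Wp u k - Wp v k\<bar> * v k + Wp u k * \<bar>u k - v k\<bar>"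
    unfolding eq using v w by (simp add: abs_mult order_trans[OF abs_triangle_ineq])
  also have "\<dots> \<le> \<bar>Wp u k - Wp v k\<bar> + Wp u k * \<bar>u k - v k\<bar>"
    using v by (simp add: mult_left_le)
  also have "\<dots> \<le> (\<Sum>j<Suc k. Wp u j * \<bar>u j - v j\<bar>)"
    using Suc.IH by simp
  finally show ?case .
qed

lemma ln_diff_le:
  fixes a b m :: real
  assumes "0 < m" "m \<le> a" "m \<le> b"
  shows "\<bar>ln a - ln b\<bar> \<le> \<bar>a - b\<bar> / m"
proof -
  have key: "ln p - ln q \<le> (p - q) / m" if "m \<le> p" "m \<le> q" "q \<le> p" for p q :: real
  proof -
    have pq: "0 < p" "0 < q" using that assms(1) by linarith+
    have "ln p - ln q = ln (p / q)" using pq by (simp add: ln_div)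
    also have "\<dots> \<le> p / q - 1" using pq by (intro ln_le_minus_one) simp
    also have "\<dots> = (p - q) / q" using pq by (simp add: field_simps)
    also have "\<dots> \<le> (p - q) / m"
      using that assms(1) by (intro divide_left_mono) auto
    finally show ?thesis .
  qed
  show ?thesis
  proof (cases "b \<le> a")
    case True
    have "0 \<le> ln a - ln b" using True assms by simp
    then show ?thesis using key[OF assms(2,3) True] True by simp
  next
    case False
    have "0 \<le> ln b - ln a" using False assms by simp
    then show ?thesis using key[OF assms(3,2)] False by simp
  qed
qed

lemma wdiff_bound:
  assumes ru: "recseq u cu" and rv: "recseq v cv"
    and agree: "\<forall>k<P. cu k = cv k" and k: "k \<le> Suc P"
  shows "\<bar>Wp u k - Wp v k\<bar> \<le> real k * (Wp u P * \<bar>u P - v P\<bar>)"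
proof -
  have "\<bar>Wp u k - Wp v k\<bar> \<le> (\<Sum>j<k. Wp u j * \<bar>u j - v j\<bar>)" by (rule Wp_diff[OF ru rv])
  also have "\<dots> \<le> real (card {..<k}) * (Wp u P * \<bar>u P - v P\<bar>)"
  proof (rule sum_bounded_above)
    fix j assume "j \<in> {..<k}"
    then have jP: "j \<le> P" using k by simp
    have ag: "\<forall>i<P - j. cu (j + i) = cv (j + i)" using agree jP by auto
    have "\<bar>u j - v j\<bar> \<le> (\<Prod>i<P - j. u (j + i)) * \<bar>u (j + (P - j)) - v (j + (P - j))\<bar>"
      by (rule diff_chain[OF ru rv ag])
    then have "Wp u j * \<bar>u j - v j\<bar> \<le> Wp u j * ((\<Prod>i<P - j. u (j + i)) * \<bar>u P - v P\<bar>)"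
      using jP Wp_nonneg[OF ru] by (intro mult_left_mono) auto
    also have "\<dots> = Wp u (j + (P - j)) * \<bar>u P - v P\<bar>"
      by (simp add: Wp_split)
    finally show "Wp u j * \<bar>u j - v j\<bar> \<le> Wp u P * \<bar>u P - v P\<bar>" using jP by simp
  qed
  finally show ?thesis by simp
qed

lemma half_pow_mult:
  assumes "k \<le> P"
  shows "(1/2::real) ^ (k div 2) * (1/2) ^ ((P - k) div 2) \<le> 2 * (1/2) ^ (P div 2)"
proof -
  have "P div 2 \<le> Suc (k div 2 + (P - k) div 2)" using assms by linarith
  then have "(1/2::real) ^ Suc (k div 2 + (P - k) div 2) \<le> (1/2) ^ (P div 2)"
    by (intro power_decreasing) auto
  then show ?thesis by (simp add: power_add)
qed

lemma jump:
  fixes u v cu cv :: "nat \<Rightarrow> real" and P :: nat and D x C :: real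
  assumes ru: "recseq u cu" and rv: "recseq v cv"
    and agree: "\<forall>k<P. cu k = cv k" and cD: "\<forall>k<P. cu k \<le> D" and D: "D \<ge> 1"
    and x: "x \<ge> 1" "u P = 1/x" "v P = 1/(x+1)" and C: "C \<ge> 0"
  shows "\<bar>((\<Sum>k<P. Wp u k * ln (1 / u k)) + Wp u P * ln (1 / u P) + Wp u (Suc P) * C)
        - ((\<Sum>k<P. Wp v k * ln (1 / v k)) + Wp v P * ln (1 / v P) + Wp v (Suc P) * C)\<bar>
      \<le> (1/2) ^ (P div 2) * (real P * (real P * ln (D + 1) + 2 * (D + 1)) + real P + 1 + C * (real P + 1))"
proof -
  define H :: real where "H = (1/2) ^ (P div 2)"
  define \<delta> where "\<delta> = \<bar>u P - v P\<bar>"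
  define L where "L = ln (D + 1)"
  have H0: "0 \<le> H" by (simp add: H_def)
  have L0: "0 \<le> L" using D by (simp add: L_def)
  have \<delta>eq: "\<delta> = 1 / (x * (x + 1))"
  proof -
    have "(1::real) / x - 1 / (x + 1) = 1 / (x * (x + 1))" using x by (simp add: field_simps)
    then have "u P - v P = 1 / (x * (x + 1))" using x(2,3) by simp
    moreover have "0 \<le> 1 / (x * (x + 1))" using x by simp
    ultimately show ?thesis by (simp add: \<delta>_def)
  qed
  have \<delta>0: "0 \<le> \<delta>" by (simp add: \<delta>_def)
  have xx: "1 \<le> x * (x + 1)" using x(1) mult_mono[of 1 x 1 "x+1"] by simp
  have \<delta>1: "\<delta> \<le> 1" unfolding \<delta>eq using xx by simp
  have \<delta>ln: "\<delta> * ln x \<le> 1"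
  proof -
    have "ln x \<le> x - 1" using x(1) by (intro ln_le_minus_one) simp
    then have "ln x \<le> x * (x + 1)" using xx x(1) by (smt (verit) mult_le_cancel_left1 mult_nonneg_nonneg)
    moreover have "0 < x * (x + 1)" using x(1) by simp
    ultimately show ?thesis unfolding \<delta>eq by (simp add: divide_le_eq)
  qed
  have WuP: "Wp u P \<le> H" unfolding H_def by (rule Wp_bound[OF ru])
  have hW: "\<bar>Wp u k - Wp v k\<bar> \<le> real k * H * \<delta>" if "k \<le> Suc P" for k
  proof -
    have "\<bar>Wp u k - Wp v k\<bar> \<le> real k * (Wp u P * \<delta>)"
      unfolding \<delta>_def by (rule wdiff_bound[OF ru rv agree that])
    also have "\<dots> \<le> real k * (H * \<delta>)"
      using WuP \<delta>0 by (intro mult_left_mono mult_right_mono) auto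
    finally show ?thesis by simp
  qed
  have lowb: "1 / (D + 1) \<le> w k" if "recseq w cw" "cw k \<le> D" for w cw k
  proof -
    have "w k = 1 / (cw k + w (Suc k))" "cw k \<ge> 1" "0 < w (Suc k)" "w (Suc k) \<le> 1"
      using recseqD[OF that(1)] by blast+
    then show ?thesis using that(2) by (simp add: frac_le)
  qed
  have T1: "\<bar>Wp u k * ln (1 / u k) - Wp v k * ln (1 / v k)\<bar> \<le> real P * H * L + 2 * (D + 1) * H"
    if k: "k < P" for k
  proof -
    have uk: "1 / (D + 1) \<le> u k" "u k \<le> 1" using lowb[OF ru] cD k recseqD(4)[OF ru] by auto
    have vk: "1 / (D + 1) \<le> v k" "v k \<le> 1" using lowb[OF rv] cD agree k recseqD(4)[OF rv] by auto
    have Dp: "0 < 1 / (D + 1)" using D by simp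
    have upos: "0 < u k" "0 < v k" using uk vk Dp by linarith+
    have lnu: "0 \<le> ln (1 / u k)" "ln (1 / u k) \<le> L"
    proof -
      show "0 \<le> ln (1 / u k)" using upos uk by simp
      have "1 / u k \<le> D + 1" using uk upos D by (simp add: field_simps)
      moreover have "0 < 1 / u k" "0 < D + 1" using upos D by auto
      ultimately show "ln (1 / u k) \<le> L" unfolding L_def using ln_le_cancel_iff by blast
    qed
    have lnd: "\<bar>ln (1 / u k) - ln (1 / v k)\<bar> \<le> (D + 1) * \<bar>u k - v k\<bar>"
    proof -
      have "\<bar>ln (1 / u k) - ln (1 / v k)\<bar> = \<bar>ln (u k) - ln (v k)\<bar>"
        using upos by (simp add: ln_div)
      also have "\<dots> \<le> \<bar>u k - v k\<bar> / (1 / (D + 1))" by (rule ln_diff_le[OF Dp uk(1) vk(1)])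
      finally show ?thesis by (simp add: mult.commute)
    qed
    have ag: "\<forall>i<P - k. cu (k + i) = cv (k + i)" using agree k by auto
    have "\<bar>u k - v k\<bar> \<le> (\<Prod>i<P - k. u (k + i)) * \<bar>u (k + (P - k)) - v (k + (P - k))\<bar>"
      by (rule diff_chain[OF ru rv ag])
    also have "\<dots> \<le> (1/2) ^ ((P - k) div 2) * \<delta>"
    proof -
      have "k + (P - k) = P" using k by simp
      then show ?thesis unfolding \<delta>_def using prod_bound[OF ru, where l="P-k" and a=k]
        by (simp add: mult_right_mono)
    qed
    finally have ud: "\<bar>u k - v k\<bar> \<le> (1/2) ^ ((P - k) div 2) * \<delta>" .
    have Wv: "Wp v k \<le> (1/2) ^ (k div 2)" "0 \<le> Wp v k" using Wp_bound[OF rv] Wp_nonneg[OF rv] by auto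
    have eq: "Wp u k * ln (1 / u k) - Wp v k * ln (1 / v k)
        = (Wp u k - Wp v k) * ln (1 / u k) + Wp v k * (ln (1 / u k) - ln (1 / v k))"
      by (simp add: algebra_simps)
    have "\<bar>Wp u k * ln (1 / u k) - Wp v k * ln (1 / v k)\<bar>
        \<le> \<bar>Wp u k - Wp v k\<bar> * ln (1 / u k) + Wp v k * \<bar>ln (1 / u k) - ln (1 / v k)\<bar>"
      unfolding eq using lnu Wv by (simp add: abs_mult order_trans[OF abs_triangle_ineq])
    also have "\<dots> \<le> (real P * H * 1) * L + (1/2) ^ (k div 2) * ((D + 1) * ((1/2) ^ ((P - k) div 2) * 1))"
    proof (intro add_mono mult_mono)
      show "\<bar>Wp u k - Wp v k\<bar> \<le> real P * H * 1"
      proof -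
        have a1: "real k * H \<le> real P * H" using k H0 by (intro mult_right_mono) auto
        have a2: "0 \<le> real P * H" using H0 by simp
        have "real k * H * \<delta> \<le> real P * H * 1" using mult_mono[OF a1 \<delta>1 a2 \<delta>0] .
        then show ?thesis using hW[of k] k by simp
      qed
      show "\<bar>ln (1 / u k) - ln (1 / v k)\<bar> \<le> (D + 1) * ((1/2) ^ ((P - k) div 2) * 1)"
      proof -
        have "(1/2::real) ^ ((P - k) div 2) * \<delta> \<le> (1/2) ^ ((P - k) div 2) * 1"
          using \<delta>1 by (intro mult_left_mono) auto
        then have "\<bar>u k - v k\<bar> \<le> (1/2) ^ ((P - k) div 2) * 1" using ud by linarith
        then have "(D + 1) * \<bar>u k - v k\<bar> \<le> (D + 1) * ((1/2) ^ ((P - k) div 2) * 1)"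
          using D by (intro mult_left_mono) auto
        then show ?thesis using lnd by linarith
      qed
    qed (use lnu Wv H0 D L0 in auto)
    also have "\<dots> = real P * H * L + (D + 1) * ((1/2) ^ (k div 2) * (1/2) ^ ((P - k) div 2))"
      by (simp add: algebra_simps)
    also have "\<dots> \<le> real P * H * L + (D + 1) * (2 * H)"
      unfolding H_def using half_pow_mult[of k P] k D by (intro add_left_mono mult_left_mono) auto
    finally show ?thesis by (simp add: algebra_simps)
  qed
  have T2: "\<bar>Wp u P * ln (1 / u P) - Wp v P * ln (1 / v P)\<bar> \<le> real P * H + H"
  proof -
    have l1: "ln (1 / u P) = ln x" "ln (1 / v P) = ln (x + 1)" using x(2,3) by auto
    have lx: "0 \<le> ln x" using x(1) by simp
    have lxx: "\<bar>ln (x + 1) - ln x\<bar> \<le> 1"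
    proof -
      have "1 / x \<le> 1" using x(1) by simp
      moreover have "\<bar>ln (x + 1) - ln x\<bar> \<le> \<bar>x + 1 - x\<bar> / x"
        by (rule ln_diff_le) (use x(1) in auto)
      moreover have "\<bar>x + 1 - x\<bar> / x = 1 / x" by simp
      ultimately show ?thesis by linarith
    qed
    have Wv: "Wp v P \<le> H" "0 \<le> Wp v P" using Wp_bound[OF rv] Wp_nonneg[OF rv] by (auto simp: H_def)
    have eq: "Wp u P * ln x - Wp v P * ln (x + 1) = (Wp u P - Wp v P) * ln x - Wp v P * (ln (x + 1) - ln x)"
      by (simp add: algebra_simps)
    have "\<bar>Wp u P * ln x - Wp v P * ln (x + 1)\<bar> \<le> \<bar>Wp u P - Wp v P\<bar> * ln x + Wp v P * \<bar>ln (x + 1) - ln x\<bar>"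
      unfolding eq using lx Wv by (simp add: abs_mult order_trans[OF abs_triangle_ineq4])
    also have "\<dots> \<le> (real P * H * \<delta>) * ln x + H * 1"
      using hW[of P] lx Wv lxx by (intro add_mono mult_mono) auto
    also have "\<dots> = real P * H * (\<delta> * ln x) + H" by simp
    also have "\<dots> \<le> real P * H * 1 + H"
      using \<delta>ln H0 by (intro add_right_mono mult_left_mono) auto
    finally show ?thesis unfolding l1 by simp
  qed
  have T3: "\<bar>Wp u (Suc P) * C - Wp v (Suc P) * C\<bar> \<le> C * (real P + 1) * H"
  proof -
    have "\<bar>Wp u (Suc P) * C - Wp v (Suc P) * C\<bar> = \<bar>Wp u (Suc P) - Wp v (Suc P)\<bar> * C"
      using C by (simp add: abs_mult left_diff_distrib[symmetric])
    also have "\<dots> \<le> (real (Suc P) * H * \<delta>) * C" using hW[of "Suc P"] C by (intro mult_right_mono) auto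
    also have "\<dots> \<le> (real (Suc P) * H * 1) * C"
      using \<delta>1 H0 C by (intro mult_right_mono mult_left_mono) auto
    finally show ?thesis by (simp add: algebra_simps)
  qed
  have S: "\<bar>(\<Sum>k<P. Wp u k * ln (1 / u k)) - (\<Sum>k<P. Wp v k * ln (1 / v k))\<bar>
      \<le> real P * (real P * H * L + 2 * (D + 1) * H)"
  proof -
    have "\<bar>(\<Sum>k<P. Wp u k * ln (1 / u k)) - (\<Sum>k<P. Wp v k * ln (1 / v k))\<bar>
        \<le> (\<Sum>k<P. \<bar>Wp u k * ln (1 / u k) - Wp v k * ln (1 / v k)\<bar>)"
      by (simp only: sum_subtractf[symmetric] sum_abs)
    also have "\<dots> \<le> real (card {..<P}) * (real P * H * L + 2 * (D + 1) * H)"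
      by (rule sum_bounded_above) (use T1 in auto)
    finally show ?thesis by simp
  qed
  have "\<bar>((\<Sum>k<P. Wp u k * ln (1 / u k)) + Wp u P * ln (1 / u P) + Wp u (Suc P) * C)
        - ((\<Sum>k<P. Wp v k * ln (1 / v k)) + Wp v P * ln (1 / v P) + Wp v (Suc P) * C)\<bar>
      \<le> real P * (real P * H * L + 2 * (D + 1) * H) + (real P * H + H) + C * (real P + 1) * H"
    using S T2 T3 by linarith
  also have "\<dots> = H * (real P * (real P * L + 2 * (D + 1)) + real P + 1 + C * (real P + 1))"
    by (simp add: algebra_simps)
  finally show ?thesis unfolding H_def L_def .
qed



definition gg :: real where "gg = cfrac (\<lambda>_. 1)"
definition gC :: real where "gC = ln (1 / gg) / (1 - gg)"

lemma gg_props: "0 < gg" "gg < 1" "gg = 1 / (1 + gg)"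
proof -
  have d: "\<forall>k. (\<lambda>_. 1::nat) k \<ge> 1" by simp
  show "0 < gg" "gg < 1" using cfrac_range[OF d] by (auto simp: gg_def)
  show "gg = 1 / (1 + gg)" using cfrac_rec[OF d] by (simp add: gg_def)
qed

lemma gC_nonneg: "0 \<le> gC"
  using gg_props by (simp add: gC_def)

lemma useq_rec:
  assumes "\<forall>k. e k \<ge> 1"
  shows "recseq (\<lambda>k. cfrac (\<lambda>i. e (k + i))) (\<lambda>k. real (e k))"
  unfolding recseq_def
proof (intro allI conjI)
  fix k
  have dk: "\<forall>j. (\<lambda>i. e (k + i)) j \<ge> 1" using assms by simp
  show "1 \<le> real (e k)" using assms by simp
  show "cfrac (\<lambda>i. e (k + i)) = 1 / (real (e k) + cfrac (\<lambda>i. e (Suc k + i)))"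
    using cfrac_rec[OF dk] by simp
  show "0 < cfrac (\<lambda>i. e (k + i))" "cfrac (\<lambda>i. e (k + i)) \<le> 1"
    using cfrac_range[OF dk] by auto
qed

lemma Phi_decomp:
  assumes e1: "\<forall>k. e k \<ge> 1" and eP: "\<forall>k>P. e k = 1"
  defines "u \<equiv> \<lambda>k. cfrac (\<lambda>i. e (k + i))"
  shows "Phi (cfrac e) = ereal ((\<Sum>k<Suc P. Wp u k * ln (1 / u k)) + Wp u (Suc P) * gC)"
proof -
  define t where "t k = Wp u k * ln (1 / u k)" for k
  have ua: "alpha (cfrac e) k = u k" for k using alpha_cfrac[OF e1] by (simp add: u_def)
  have P1: "Phi (cfrac e) = (\<Sum>k. ereal (t k))"
    unfolding Phi_def t_def Wp_def ua ..
  have ug: "u (Suc P + k) = gg" for k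
  proof -
    have "(\<lambda>i. e (Suc P + k + i)) = (\<lambda>_. 1)" using eP by auto
    then show ?thesis by (simp add: u_def gg_def)
  qed
  have WQ: "Wp u (Suc P + k) = Wp u (Suc P) * gg ^ k" for k
  proof (induction k)
    case 0 then show ?case by simp
  next
    case (Suc k)
    have "Wp u (Suc P + Suc k) = Wp u (Suc P + k) * u (Suc P + k)"
      by (simp add: Wp_def)
    then show ?case using Suc ug by simp
  qed
  have tsh: "t (k + Suc P) = (Wp u (Suc P) * ln (1 / gg)) * gg ^ k" for k
    unfolding t_def using WQ[of k] ug[of k] by (simp add: add.commute)
  have gs: "(\<lambda>k. gg ^ k) sums (1 / (1 - gg))" using geometric_sums[of gg] gg_props by simp
  have s1: "(\<lambda>k. t (k + Suc P)) sums ((Wp u (Suc P) * ln (1 / gg)) * (1 / (1 - gg)))"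
    unfolding tsh by (rule sums_mult[OF gs])
  have summ: "summable t" using summable_iff_shift[of t "Suc P"] s1 sums_summable by blast
  have "suminf t = (\<Sum>k. t (k + Suc P)) + (\<Sum>i<Suc P. t i)"
    by (rule suminf_split_initial_segment[OF summ])
  also have "(\<Sum>k. t (k + Suc P)) = Wp u (Suc P) * gC"
    using sums_unique[OF s1] by (simp add: gC_def)
  finally have "suminf t = (\<Sum>k<Suc P. t k) + Wp u (Suc P) * gC" by simp
  then show ?thesis unfolding P1 suminf_ereal'[OF summ] by (simp add: t_def)
qed



lemma small_q:
  fixes L D C \<epsilon> :: real and n :: nat
  assumes "\<epsilon> > 0"
  shows "\<exists>q. q > n \<and> (1/2::real) ^ ((4 * q) div 2) * (real (4 * q) * (real (4 * q) * L + 2 * (D + 1))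
            + real (4 * q) + 1 + C * (real (4 * q) + 1)) < \<epsilon>"
proof -
  define s where "s q = real q * (1/2::real) ^ q" for q
  define t where "t q = (1/2::real) ^ q" for q
  have s0: "s \<longlonglongrightarrow> 0" unfolding s_def using powser_times_n_limit_0[of "1/2::real"] by simp
  have t0: "t \<longlonglongrightarrow> 0" unfolding t_def by (rule LIMSEQ_power_zero) simp
  define E where "E q = 16 * L * (s q)^2 + (8 * (D + 1) + 4 + 4 * C) * (s q * t q) + (1 + C) * (t q)^2" for q
  have "E \<longlonglongrightarrow> 16 * L * 0^2 + (8 * (D + 1) + 4 + 4 * C) * (0 * 0) + (1 + C) * 0^2"
    unfolding E_def by (intro tendsto_intros s0 t0)
  then have E0: "E \<longlonglongrightarrow> 0" by simp
  have eq: "(1/2::real) ^ ((4 * q) div 2) * (real (4 * q) * (real (4 * q) * L + 2 * (D + 1))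
            + real (4 * q) + 1 + C * (real (4 * q) + 1)) = E q" for q
  proof -
    have "(4 * q) div 2 = q * 2" by simp
    then have "(1/2::real) ^ ((4 * q) div 2) = (1/2) ^ (q * 2)" by (simp only:)
    also have "\<dots> = ((1/2) ^ q) ^ 2" by (rule power_mult)
    finally have "(1/2::real) ^ ((4 * q) div 2) = (t q)^2" by (simp only: t_def)
    then show ?thesis by (simp add: E_def s_def t_def power2_eq_square algebra_simps)
  qed
  have "eventually (\<lambda>q. E q < \<epsilon>) sequentially" using order_tendstoD(2)[OF E0 assms] .
  then obtain q0 where q0: "\<And>q. q \<ge> q0 \<Longrightarrow> E q < \<epsilon>" by (auto simp: eventually_sequentially)
  show ?thesis
    by (rule exI[of _ "max q0 (Suc n)"]) (use q0[of "max q0 (Suc n)"] eq in auto)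
qed

theorem mainTheorem3:
  fixes a :: "nat \<Rightarrow> nat" and n :: nat and \<epsilon> :: real
  assumes "\<forall>k\<le>n. a k > 0"
    and "\<epsilon> > 0"
  shows "\<exists>m::nat. m > 0 \<and> (\<exists>N::nat. N > 0 \<and>
     (let \<omega> = cfrac (\<lambda>k. if k \<le> n then a k else 1);
          \<beta> = cfrac (\<lambda>k. if k \<le> n then a k else if k = n + m then N else 1)
      in Phi \<omega> + ereal \<epsilon> < Phi \<beta> \<and> Phi \<beta> < Phi \<omega> + ereal (2 * \<epsilon>)))"
proof -
  define D :: real where "D = real (1 + (\<Sum>k\<le>n. a k))"
  have D1: "D \<ge> 1" by (simp add: D_def sum_nonneg)
  have aD: "real (a k) \<le> D" if "k \<le> n" for k
  proof -
    have "a k \<le> (\<Sum>k\<le>n. a k)" using that by (intro member_le_sum) auto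
    then have "real (a k) \<le> real (\<Sum>k\<le>n. a k)" by (simp only: of_nat_le_iff)
    then show ?thesis unfolding D_def by linarith
  qed
  define C where "C = gC"
  have C0: "C \<ge> 0" using gC_nonneg by (simp add: C_def)
  define L where "L = ln (D + 1)"
  obtain q where qn: "q > n" and qE: "(1/2::real) ^ ((4 * q) div 2) * (real (4 * q) * (real (4 * q) * L + 2 * (D + 1))
            + real (4 * q) + 1 + C * (real (4 * q) + 1)) < \<epsilon>"
    using small_q[OF assms(2)] by blast
  define P where "P = 4 * q"
  define Eb where "Eb = (1/2::real) ^ (P div 2) * (real P * (real P * L + 2 * (D + 1)) + real P + 1 + C * (real P + 1))"
  have Eb: "Eb < \<epsilon>" using qE by (simp add: Eb_def P_def)
  define m where "m = P - n"
  have m0: "m > 0" and nm: "n + m = P" using qn by (auto simp: m_def P_def)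
  define e where "e N k = (if k \<le> n then a k else if k = P then N else 1)" for N k
  have e1: "\<forall>k. e N k \<ge> 1" if "N \<ge> 1" for N
    using that assms(1) by (auto simp: e_def Suc_le_eq)
  have eP: "\<forall>k>P. e N k = 1" for N using qn by (auto simp: e_def P_def)
  define u where "u N k = cfrac (\<lambda>i. e N (k + i))" for N k
  define f where "f N = (\<Sum>k<Suc P. Wp (u N) k * ln (1 / u N k)) + Wp (u N) (Suc P) * C" for N
  have Phif: "Phi (cfrac (e N)) = ereal (f N)" if "N \<ge> 1" for N
    using Phi_decomp[OF e1[OF that] eP[of N]] unfolding f_def C_def u_def .
  have rec: "recseq (u N) (\<lambda>k. real (e N k))" if "N \<ge> 1" for N
    using useq_rec[OF e1[OF that]] unfolding u_def .
  have uP: "u N P = 1 / (real N + gg)" if "N \<ge> 1" for N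
  proof -
    have "u N P = 1 / (real (e N P) + u N (Suc P))" using recseqD(2)[OF rec[OF that]] .
    moreover have "e N P = N" using qn by (simp add: e_def P_def)
    moreover have "u N (Suc P) = gg"
    proof -
      have "(\<lambda>i. e N (Suc P + i)) = (\<lambda>_. 1)" using eP[of N] by auto
      then show ?thesis by (simp add: u_def gg_def)
    qed
    ultimately show ?thesis by simp
  qed
  have fsplit: "f N = (\<Sum>k<P. Wp (u N) k * ln (1 / u N k)) + Wp (u N) P * ln (1 / u N P) + Wp (u N) (Suc P) * C" for N
    by (simp add: f_def)
  have jumpN: "f (Suc N) \<le> f N + Eb" if "N \<ge> 1" for N
  proof -
    have sN: "Suc N \<ge> 1" by simp
    note rec[OF sN]
    have "\<bar>f N - f (Suc N)\<bar> \<le> Eb"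
      unfolding fsplit Eb_def L_def
    proof (rule jump[OF rec[OF that] rec[OF sN], where D=D and x="real N + gg"])
      show "\<forall>k<P. real (e N k) = real (e (Suc N) k)" by (auto simp: e_def)
      show "\<forall>k<P. real (e N k) \<le> D" using aD D1 by (auto simp: e_def)
      show "D \<ge> 1" by (rule D1)
      show "real N + gg \<ge> 1" using that gg_props by simp
      show "u N P = 1 / (real N + gg)" by (rule uP[OF that])
      show "u (Suc N) P = 1 / (real N + gg + 1)" using uP[of "Suc N"] by (simp add: add_ac)
      show "C \<ge> 0" by (rule C0)
    qed
    then show ?thesis by linarith
  qed
  have ulow: "1 / (D + 1) \<le> u N k" if "N \<ge> 1" "k < P" for N k
  proof -
    have "u N k = 1 / (real (e N k) + u N (Suc k))" "1 \<le> real (e N k)" "0 < u N (Suc k)" "u N (Suc k) \<le> 1"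
      using recseqD[OF rec[OF that(1)]] by blast+
    moreover have "real (e N k) \<le> D" using that aD D1 by (auto simp: e_def)
    ultimately show ?thesis by (simp add: frac_le)
  qed
  define c where "c = (1 / (D + 1)) ^ P"
  have c0: "0 < c" using D1 by (simp add: c_def)
  have flow: "c * ln (real N) \<le> f N" if "N \<ge> 1" for N
  proof -
    have r: "recseq (u N) (\<lambda>k. real (e N k))" by (rule rec[OF that])
    have un: "0 < u N k" "u N k \<le> 1" for k using recseqD(3,4)[OF r] by auto
    have t0: "0 \<le> Wp (u N) k * ln (1 / u N k)" for k
      using Wp_nonneg[OF r, of k] un[of k] by simp
    have s0: "0 \<le> (\<Sum>k<P. Wp (u N) k * ln (1 / u N k))" by (intro sum_nonneg) (use t0 in auto)
    have w0: "0 \<le> Wp (u N) (Suc P) * C" using Wp_nonneg[OF r] C0 by simp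
    have cW: "c \<le> Wp (u N) P"
      unfolding c_def Wp_def
    proof -
      have "(\<Prod>j<P. 1 / (D + 1)) \<le> (\<Prod>j<P. u N j)"
        by (rule prod_mono) (use ulow[OF that] D1 in auto)
      then show "(1 / (D + 1)) ^ P \<le> (\<Prod>j<P. u N j)" by simp
    qed
    have l1: "ln (1 / u N P) = ln (real N + gg)" using uP[OF that] by simp
    have "ln (real N) \<le> ln (real N + gg)" using that gg_props by simp
    moreover have "0 \<le> ln (real N)" using that by simp
    ultimately have "c * ln (real N) \<le> Wp (u N) P * ln (1 / u N P)"
      unfolding l1 using cW c0 by (intro mult_mono) auto
    then show ?thesis unfolding fsplit using s0 w0 by linarith
  qed
  define R where "R = (f 1 + \<epsilon>) / c"
  define Nb where "Nb = nat \<lceil>exp R\<rceil> + 1"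
  have Nb1: "Nb \<ge> 1" by (simp add: Nb_def)
  have "exp R < real Nb" unfolding Nb_def by linarith
  then have "R < ln (real Nb)" using Nb1 by (metis exp_gt_zero less_trans ln_exp ln_less_cancel_iff)
  then have "c * R < c * ln (real Nb)" using c0 by simp
  then have "f 1 + \<epsilon> < f Nb" using flow[OF Nb1] c0 by (simp add: R_def)
  then have ex: "\<exists>N. N \<ge> 1 \<and> f 1 + \<epsilon> < f N" using Nb1 by blast
  define N0 where "N0 = (LEAST N. N \<ge> 1 \<and> f 1 + \<epsilon> < f N)"
  have N0: "N0 \<ge> 1" "f 1 + \<epsilon> < f N0" using LeastI_ex[OF ex] by (auto simp: N0_def)
  have "N0 \<noteq> 1" using N0(2) assms(2) by auto
  then obtain M where M: "N0 = Suc M" "M \<ge> 1" using N0(1) by (cases N0) auto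
  have "\<not> (M \<ge> 1 \<and> f 1 + \<epsilon> < f M)"
    using not_less_Least[of M "\<lambda>N. N \<ge> 1 \<and> f 1 + \<epsilon> < f N"] M by (simp add: N0_def)
  then have fM: "f M \<le> f 1 + \<epsilon>" using M by simp
  have upper: "f N0 < f 1 + 2 * \<epsilon>" using jumpN[OF M(2)] M(1) fM Eb by simp
  have om: "cfrac (\<lambda>k. if k \<le> n then a k else 1) = cfrac (e 1)"
    by (rule arg_cong[where f=cfrac]) (auto simp: e_def)
  have be: "cfrac (\<lambda>k. if k \<le> n then a k else if k = n + m then N0 else 1) = cfrac (e N0)"
    unfolding nm by (rule arg_cong[where f=cfrac]) (auto simp: e_def)
  show ?thesis
    apply (rule exI[of _ m])
    apply (intro conjI m0 exI[of _ N0])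
    using N0 upper Phif[of 1] Phif[OF N0(1)] unfolding Let_def om be by auto
qed


end
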